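(* Let $n\ge2$, $p>n$, and let $A$ satisfy: (i) $A\in C([0,+\infty))$; (ii) $\delta\le A\le L$ for positive constants $\delta,L$; (iii) $t\mapsto t^{p-1}A(t)$ is strictly increasing for $t>0$. Let $x_0\in\mathbb{R}^n$, $R>0$, and $f\in L^\infty(B_R(x_0))$. Then there exists a family $\{v_{a,x_0}\}_{a\ge0}$ of functions, radially symmetric with respect to $x_0$, each of which is a weak supersolution of $-\mathrm{div}(|\nabla v|^{p-2}A(|\nabla v|)\nabla v)=f$ in $B_R(x_0)\setminus\{x_0\}$, such that for every $a\ge0$ and $x\in B_R(x_0)$, $$\Big(\frac{1}{L}\Big)^{\frac{1}{p-1}}a\,\frac{|x-x_0|^{\alpha}}{\alpha}\le v_{a,x_0}(x)\le\Big(\frac{1}{\delta}\Big)^{\frac{1}{p-1}}\left(a+\Big(\frac{R^n\|f\|_\infty}{n}\Big)^{\frac{1}{p-1}}\right)\frac{|x-x_0|^{\alpha}}{\alpha},$$ where $\alpha=\frac{p-n}{p-1}$ and $\|f\|_\infty$ is the $L^\infty(B_R(x_0))$ norm of $f$.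
   Context: A function $v\in W^{1,p}_{loc}(\Omega)$ is a weak supersolution of $-\mathrm{div}(|\nabla v|^{p-2}A(|\nabla v|)\nabla v)=f$ in an open set $\Omega$ if $\int_\Omega |\nabla v|^{p-2}A(|\nabla v|)\nabla v\cdot\nabla\eta\,dx\ge\int_\Omega f\eta\,dx$ for all nonnegative $\eta\in C_0^\infty(\Omega)$. *)

theory Defs
  imports "HOL-Analysis.Analysis"
begin

coinductive smooth_fun :: "('a::euclidean_space \<Rightarrow> real) \<Rightarrow> bool" where
  "(\<forall>x. \<phi> differentiable (at x)) \<Longrightarrow>
   (\<forall>b\<in>Basis. smooth_fun (\<lambda>x. frechet_derivative \<phi> (at x) b)) \<Longrightarrow> smooth_fun \<phi>"

definition grad :: "('a::euclidean_space \<Rightarrow> real) \<Rightarrow> 'a \<Rightarrow> 'a" where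
  "grad \<phi> x = (\<Sum>b\<in>Basis. frechet_derivative \<phi> (at x) b *\<^sub>R b)"

definition test_fun :: "'a::euclidean_space set \<Rightarrow> ('a \<Rightarrow> real) \<Rightarrow> bool" where
  "test_fun \<Omega> \<phi> \<longleftrightarrow> smooth_fun \<phi> \<and> compact (closure {x. \<phi> x \<noteq> 0})
      \<and> closure {x. \<phi> x \<noteq> 0} \<subseteq> \<Omega>"

definition Lp_loc :: "real \<Rightarrow> 'a::euclidean_space set \<Rightarrow> ('a \<Rightarrow> 'b::euclidean_space) \<Rightarrow> bool" where
  "Lp_loc p \<Omega> u \<longleftrightarrow> (\<forall>K. compact K \<and> K \<subseteq> \<Omega> \<longrightarrow>
      set_borel_measurable lebesgue K u \<and> set_integrable lebesgue K (\<lambda>x. norm (u x) powr p))"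

definition weak_gradient :: "'a::euclidean_space set \<Rightarrow> ('a \<Rightarrow> real) \<Rightarrow> ('a \<Rightarrow> 'a) \<Rightarrow> bool" where
  "weak_gradient \<Omega> v g \<longleftrightarrow> Lp_loc 1 \<Omega> v \<and> Lp_loc 1 \<Omega> g \<and>
     (\<forall>\<phi>. test_fun \<Omega> \<phi> \<longrightarrow> (\<forall>i\<in>Basis.
        (LINT x:\<Omega>|lebesgue. v x * frechet_derivative \<phi> (at x) i)
          = - (LINT x:\<Omega>|lebesgue. (g x \<bullet> i) * \<phi> x)))"

definition weak_supersolution ::
  "real \<Rightarrow> (real \<Rightarrow> real) \<Rightarrow> ('a::euclidean_space \<Rightarrow> real) \<Rightarrow> 'a set \<Rightarrow> ('a \<Rightarrow> real) \<Rightarrow> bool" where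
  "weak_supersolution p A f \<Omega> v \<longleftrightarrow> (\<exists>g. weak_gradient \<Omega> v g \<and> Lp_loc p \<Omega> v \<and> Lp_loc p \<Omega> g \<and>
     (\<forall>\<eta>. test_fun \<Omega> \<eta> \<and> (\<forall>x. \<eta> x \<ge> 0) \<longrightarrow>
        set_integrable lebesgue \<Omega> (\<lambda>x. norm (g x) powr (p - 2) * A (norm (g x)) * (g x \<bullet> grad \<eta> x)) \<and>
        set_integrable lebesgue \<Omega> (\<lambda>x. f x * \<eta> x) \<and>
        (LINT x:\<Omega>|lebesgue. norm (g x) powr (p - 2) * A (norm (g x)) * (g x \<bullet> grad \<eta> x))
          \<ge> (LINT x:\<Omega>|lebesgue. f x * \<eta> x)))"

definition Linf_on :: "'a::euclidean_space set \<Rightarrow> ('a \<Rightarrow> real) \<Rightarrow> bool" where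
  "Linf_on S f \<longleftrightarrow> set_borel_measurable lebesgue S f \<and>
     (\<exists>C. AE x in lebesgue. x \<in> S \<longrightarrow> \<bar>f x\<bar> \<le> C)"

definition Linf_norm :: "'a::euclidean_space set \<Rightarrow> ('a \<Rightarrow> real) \<Rightarrow> real" where
  "Linf_norm S f = Inf {C. C \<ge> 0 \<and> (AE x in lebesgue. x \<in> S \<longrightarrow> \<bar>f x\<bar> \<le> C)}"

end

theory Submission
  imports Defs
begin


lemma cs_integrable:
  fixes f :: "'a::euclidean_space \<Rightarrow> real"
  assumes "continuous_on UNIV f" "compact S" "\<And>x. x \<notin> S \<Longrightarrow> f x = 0"
  shows "integrable lborel f"
proof -
  have "integrable lborel (\<lambda>x. indicator S x *\<^sub>R f x)"
    by (rule borel_integrable_compact[OF assms(2)]) (rule continuous_on_subset[OF assms(1)], simp)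
  also have "(\<lambda>x. indicator S x *\<^sub>R f x) = f"
    using assms(3) by (auto simp: indicator_def fun_eq_iff)
  finally show ?thesis .
qed

lemma translate_integral:
  fixes f :: "'a::euclidean_space \<Rightarrow> real"
  assumes "f \<in> borel_measurable borel"
  shows "integral\<^sup>L lborel (\<lambda>x. f (c + x)) = integral\<^sup>L lborel f"
    and "integrable lborel (\<lambda>x. f (c + x)) \<longleftrightarrow> integrable lborel f"
proof -
  have "integral\<^sup>L lborel f = integral\<^sup>L (distr lborel borel ((+) c)) f"
    by (simp add: lborel_distr_plus)
  also have "\<dots> = integral\<^sup>L lborel (\<lambda>x. f (c + x))"
    by (rule integral_distr) (use assms in auto)
  finally show "integral\<^sup>L lborel (\<lambda>x. f (c + x)) = integral\<^sup>L lborel f" by simp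
  have "integrable lborel f \<longleftrightarrow> integrable (distr lborel borel ((+) c)) f"
    by (simp add: lborel_distr_plus)
  also have "\<dots> \<longleftrightarrow> integrable lborel (\<lambda>x. f (c + x))"
    by (rule integrable_distr_eq) (use assms in auto)
  finally show "integrable lborel (\<lambda>x. f (c + x)) \<longleftrightarrow> integrable lborel f" by simp
qed



lemma ftc_zero:
  fixes u du :: "'a::euclidean_space \<Rightarrow> real" and D :: "'a \<Rightarrow> 'a \<Rightarrow> real"
  assumes S: "compact S" and u0: "\<And>x. x \<notin> S \<Longrightarrow> u x = 0"
    and du0: "\<And>x. x \<notin> S \<Longrightarrow> du x = 0"
    and duc: "continuous_on UNIV du"
    and uD: "\<And>y. (u has_derivative D y) (at y)"
    and Di: "\<And>y. D y i = du y"
    and ni: "norm i = 1"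
  shows "integral\<^sup>L lborel du = 0"
proof -
  have ucont: "continuous_on UNIV u"
    using uD has_derivative_continuous by (meson continuous_at_imp_continuous_on)
  obtain B where B: "\<And>x. \<bar>du x\<bar> \<le> B" "B \<ge> 0"
  proof -
    have "bounded (du ` S)" using compact_continuous_image[OF continuous_on_subset[OF duc] S]
      by (simp add: compact_imp_bounded)
    then obtain B0 where B0: "\<forall>y\<in>du ` S. norm y \<le> B0" unfolding bounded_iff by blast
    have "\<bar>du x\<bar> \<le> max B0 0" for x
    proof (cases "x \<in> S")
      case True then have "norm (du x) \<le> B0" using B0 by blast
      then show ?thesis by simp
    next
      case False then show ?thesis using du0 by simp
    qed
    then show ?thesis by (intro that[of "max B0 0"]) auto
  qed
  obtain r where r0: "\<forall>x\<in>S. norm x \<le> r" using compact_imp_bounded[OF S] unfolding bounded_pos by blast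
  have r: "S \<subseteq> cball 0 r" using r0 by auto
  define K :: "'a set" where "K = cball 0 (r + 1)"
  define h :: "nat \<Rightarrow> real" where "h k = 1 / real (Suc k)" for k
  have h: "0 < h k" "h k \<le> 1" for k by (auto simp: h_def field_simps)
  define s where "s k x = (u (x + h k *\<^sub>R i) - u x) / h k" for k x
  have line: "((\<lambda>t. u (x + t *\<^sub>R i)) has_real_derivative du (x + t *\<^sub>R i)) (at t)" for x t
  proof -
    have "((\<lambda>t. x + t *\<^sub>R i) has_derivative (\<lambda>s. s *\<^sub>R i)) (at t)"
      by (auto intro!: derivative_eq_intros)
    from has_derivative_compose[OF this uD]
    have "((\<lambda>t. u (x + t *\<^sub>R i)) has_derivative (\<lambda>s. D (x + t *\<^sub>R i) (s *\<^sub>R i))) (at t)" .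
    moreover have "(\<lambda>s. D (x + t *\<^sub>R i) (s *\<^sub>R i)) = (*) (du (x + t *\<^sub>R i))"
      using Di linear_scale[OF has_derivative_linear[OF uD]] by (auto simp: fun_eq_iff)
    ultimately show ?thesis by (simp add: has_field_derivative_def)
  qed
  have cont_s: "continuous_on UNIV (s k)" for k
    unfolding s_def using h[of k] by (intro continuous_intros continuous_on_compose2[OF ucont]) auto
  have bound: "norm (s k x) \<le> indicator K x *\<^sub>R B" for k x
  proof (cases "x \<in> K")
    case False
    then have "norm x > r + 1" by (auto simp: K_def)
    then have "x \<notin> S" using r by auto
    moreover have "x + h k *\<^sub>R i \<notin> S"
    proof
      assume "x + h k *\<^sub>R i \<in> S"
      then have "norm (x + h k *\<^sub>R i) \<le> r" using r by auto
      moreover have "norm x \<le> norm (x + h k *\<^sub>R i) + norm (h k *\<^sub>R i)"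
        by (metis add_diff_cancel_right' norm_triangle_ineq4)
      ultimately show False using \<open>norm x > r + 1\<close> h[of k] ni by simp
    qed
    ultimately show ?thesis using False u0 by (simp add: s_def)
  next
    case True
    obtain z where "0 < z" "z < h k" and eq: "u (x + h k *\<^sub>R i) - u (x + 0 *\<^sub>R i) = (h k - 0) * du (x + z *\<^sub>R i)"
      using MVT2[of 0 "h k" "\<lambda>t. u (x + t *\<^sub>R i)" "\<lambda>t. du (x + t *\<^sub>R i)"] h[of k] line by blast
    then have "s k x = du (x + z *\<^sub>R i)" using h[of k] by (simp add: s_def)
    then show ?thesis using True B by simp
  qed
  have lim: "(\<lambda>k. s k x) \<longlonglongrightarrow> du x" for x
  proof -
    have "((\<lambda>t. (u (x + t *\<^sub>R i) - u (x + 0 *\<^sub>R i)) / (t - 0)) \<longlongrightarrow> du (x + 0 *\<^sub>R i)) (at 0)"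
      using line[of x 0] unfolding has_field_derivative_iff by simp
    then have 1: "((\<lambda>t. (u (x + t *\<^sub>R i) - u x) / t) \<longlongrightarrow> du x) (at 0)" by simp
    have 2: "filterlim h (at 0) sequentially"
    proof (rule filterlim_atI)
      show "h \<longlonglongrightarrow> 0" unfolding h_def using LIMSEQ_Suc[OF lim_inverse_n'] by simp
      show "\<forall>\<^sub>F k in sequentially. h k \<noteq> 0" using h by (simp add: less_imp_neq[symmetric])
    qed
    from filterlim_compose[OF 1 2] show ?thesis by (simp add: s_def o_def)
  qed
  have Kint: "integrable lborel (\<lambda>x. indicator K x *\<^sub>R B)"
    by (rule borel_integrable_compact) (auto simp: K_def)
  have meas_du: "du \<in> borel_measurable lborel"
    using duc by (simp add: borel_measurable_continuous_onI)
  have meas_s: "s k \<in> borel_measurable lborel" for k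
    using cont_s by (simp add: borel_measurable_continuous_onI)
  have conv: "(\<lambda>k. integral\<^sup>L lborel (s k)) \<longlonglongrightarrow> integral\<^sup>L lborel du"
    by (rule integral_dominated_convergence[OF meas_du meas_s Kint])
       (use lim bound in simp_all)
  have uint: "integrable lborel u"
    by (rule cs_integrable[OF ucont S u0])
  have umeas: "u \<in> borel_measurable borel"
    using ucont by (simp add: borel_measurable_continuous_onI)
  have zero: "integral\<^sup>L lborel (s k) = 0" for k
  proof -
    have tr: "integral\<^sup>L lborel (\<lambda>x. u (h k *\<^sub>R i + x)) = integral\<^sup>L lborel u"
      "integrable lborel (\<lambda>x. u (h k *\<^sub>R i + x))"
      using translate_integral[OF umeas, of "h k *\<^sub>R i"] uint by auto
    have se: "s k = (\<lambda>x. (1 / h k) * (u (h k *\<^sub>R i + x) - u x))"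
      by (simp add: s_def fun_eq_iff add.commute)
    have "integral\<^sup>L lborel (s k) = (1 / h k) * (integral\<^sup>L lborel (\<lambda>x. u (h k *\<^sub>R i + x)) - integral\<^sup>L lborel u)"
      unfolding se integral_mult_right_zero by (rule arg_cong[where f="\<lambda>y. (1 / h k) * y"], rule Bochner_Integration.integral_diff[OF tr(2) uint])
    then show ?thesis using tr by simp
  qed
  have "(\<lambda>k. integral\<^sup>L lborel (s k)) \<longlonglongrightarrow> 0" using zero by simp
  from LIMSEQ_unique[OF conv this] show ?thesis .
qed



lemma isCont_transform_open:
  assumes "isCont f a" "open S" "a \<in> S" "\<And>x. x \<in> S \<Longrightarrow> f x = g x"
  shows "isCont g a"
proof -
  have "(f \<longlongrightarrow> f a) (at a)" using assms(1) isCont_def by blast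
  then have "(g \<longlongrightarrow> f a) (at a)"
    by (rule Lim_transform_within_open[OF _ assms(2,3)]) (use assms(4) in auto)
  then show ?thesis using assms(3,4) isCont_def by fastforce
qed

lemma glue_cont:
  fixes f g :: "'a::euclidean_space \<Rightarrow> real"
  assumes "open \<Omega>" "closed S" "S \<subseteq> \<Omega>" "\<And>x. x \<in> \<Omega> \<Longrightarrow> isCont f x"
    and "\<And>x. x \<in> \<Omega> \<Longrightarrow> g x = f x" "\<And>x. x \<notin> S \<Longrightarrow> g x = 0"
  shows "continuous_on UNIV g"
proof (rule continuous_at_imp_continuous_on, intro ballI)
  fix x :: 'a
  show "isCont g x"
  proof (cases "x \<in> \<Omega>")
    case True
    then show ?thesis using isCont_transform_open[OF assms(4)[OF True] assms(1) True] assms(5) by metis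
  next
    case False
    then have "x \<in> - S" using assms(3) by auto
    moreover have "open (- S)" using assms(2) by auto
    ultimately show ?thesis using isCont_transform_open[where f="\<lambda>_. 0" and a=x and S="- S" and g=g] assms(6) by auto
  qed
qed

lemma deriv_zero_outside:
  fixes \<eta> :: "'a::euclidean_space \<Rightarrow> real"
  assumes "closed S" "\<And>x. x \<notin> S \<Longrightarrow> \<eta> x = 0" "(\<eta> has_derivative D) (at x)" "x \<notin> S"
  shows "D h = 0"
proof -
  have "((\<lambda>_. 0) has_derivative (\<lambda>_. 0)) (at x)" by simp
  then have "(\<eta> has_derivative (\<lambda>_. 0)) (at x)"
    by (rule has_derivative_transform_within_open[of _ _ _ _ "- S"]) (use assms in auto)
  from has_derivative_unique[OF assms(3) this] show ?thesis by simp
qed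

lemma ibp:
  fixes \<psi> \<eta> :: "'a::euclidean_space \<Rightarrow> real" and G :: "'a \<Rightarrow> 'a" and D\<eta> :: "'a \<Rightarrow> 'a \<Rightarrow> real"
  assumes \<Omega>: "open \<Omega>" and S: "compact S" "S \<subseteq> \<Omega>" and \<eta>0: "\<And>x. x \<notin> S \<Longrightarrow> \<eta> x = 0"
    and \<eta>D: "\<And>x. (\<eta> has_derivative D\<eta> x) (at x)"
    and D\<eta>c: "continuous_on UNIV (\<lambda>x. D\<eta> x i)"
    and \<psi>D: "\<And>x. x \<in> \<Omega> \<Longrightarrow> (\<psi> has_derivative (\<lambda>h. G x \<bullet> h)) (at x)"
    and Gc: "continuous_on \<Omega> (\<lambda>x. G x \<bullet> i)"
    and ni: "norm i = 1"
  shows "set_integrable lebesgue \<Omega> (\<lambda>x. \<psi> x * D\<eta> x i)"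
    and "set_integrable lebesgue \<Omega> (\<lambda>x. (G x \<bullet> i) * \<eta> x)"
    and "(LINT x:\<Omega>|lebesgue. \<psi> x * D\<eta> x i) = - (LINT x:\<Omega>|lebesgue. (G x \<bullet> i) * \<eta> x)"
proof -
  have Sc: "closed S" using S compact_imp_closed by blast
  have D0: "D\<eta> x h = 0" if "x \<notin> S" for x h
    using deriv_zero_outside[OF Sc \<eta>0 \<eta>D that] .
  define a where "a x = (if x \<in> \<Omega> then \<psi> x * D\<eta> x i else 0)" for x
  define b where "b x = (if x \<in> \<Omega> then (G x \<bullet> i) * \<eta> x else 0)" for x
  define u where "u x = (if x \<in> \<Omega> then \<psi> x * \<eta> x else 0)" for x
  define D where "D y = (if y \<in> \<Omega> then (\<lambda>h. \<psi> y * D\<eta> y h + (G y \<bullet> h) * \<eta> y) else (\<lambda>h. 0))" for y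
  have \<psi>c: "isCont \<psi> x" if "x \<in> \<Omega>" for x
    using \<psi>D[OF that] has_derivative_continuous by blast
  have \<eta>c: "isCont \<eta> x" for x
    using \<eta>D has_derivative_continuous by blast
  have Gc': "isCont (\<lambda>x. G x \<bullet> i) x" if "x \<in> \<Omega>" for x
    using Gc \<Omega> that continuous_on_eq_continuous_at by blast
  have D\<eta>c': "isCont (\<lambda>x. D\<eta> x i) x" for x
    using D\<eta>c continuous_on_eq_continuous_at by blast
  have ac: "continuous_on UNIV a"
    by (rule glue_cont[OF \<Omega> Sc S(2), where f="\<lambda>x. \<psi> x * D\<eta> x i"])
       (use \<psi>c D\<eta>c' D0 in \<open>auto simp: a_def intro!: continuous_intros\<close>)
  have bc: "continuous_on UNIV b"
    by (rule glue_cont[OF \<Omega> Sc S(2), where f="\<lambda>x. (G x \<bullet> i) * \<eta> x"])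
       (use Gc' \<eta>c \<eta>0 in \<open>auto simp: b_def intro!: continuous_intros\<close>)
  have a0: "a x = 0" if "x \<notin> S" for x using D0[OF that] by (simp add: a_def)
  have b0: "b x = 0" if "x \<notin> S" for x using \<eta>0[OF that] by (simp add: b_def)
  have u0: "u x = 0" if "x \<notin> S" for x using \<eta>0[OF that] by (simp add: u_def)
  have aint: "integrable lborel a" by (rule cs_integrable[OF ac S(1) a0])
  have bint: "integrable lborel b" by (rule cs_integrable[OF bc S(1) b0])
  have uD: "(u has_derivative D y) (at y)" for y
  proof (cases "y \<in> \<Omega>")
    case True
    have "((\<lambda>x. \<psi> x * \<eta> x) has_derivative (\<lambda>h. \<psi> y * D\<eta> y h + (G y \<bullet> h) * \<eta> y)) (at y)"
      by (rule has_derivative_mult[OF \<psi>D[OF True] \<eta>D, THEN has_derivative_eq_rhs]) auto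
    then have "(u has_derivative (\<lambda>h. \<psi> y * D\<eta> y h + (G y \<bullet> h) * \<eta> y)) (at y)"
      by (rule has_derivative_transform_within_open[OF _ \<Omega> True]) (simp add: u_def)
    then show ?thesis using True by (simp add: D_def)
  next
    case False
    then have y: "y \<in> - S" using S by auto
    have "((\<lambda>_. 0) has_derivative (\<lambda>_. 0)) (at y)" by simp
    then have "(u has_derivative (\<lambda>_. 0)) (at y)"
      by (rule has_derivative_transform_within_open[of _ _ _ _ "- S"]) (use y Sc u0 in auto)
    then show ?thesis using False by (simp add: D_def)
  qed
  have dus: "\<forall>x. x \<notin> S \<longrightarrow> a x + b x = 0" using a0 b0 by simp
  have "integral\<^sup>L lborel (\<lambda>x. a x + b x) = 0"
    by (rule ftc_zero[OF S(1) u0 _ _ uD, where i=i])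
       (use dus ac bc ni in \<open>auto simp: D_def a_def b_def intro!: continuous_intros\<close>)
  then have eq: "integral\<^sup>L lborel a = - integral\<^sup>L lborel b"
    using Bochner_Integration.integral_add[OF aint bint] by simp
  have am: "a \<in> borel_measurable lborel" using ac borel_measurable_continuous_onI by simp
  have bm: "b \<in> borel_measurable lborel" using bc borel_measurable_continuous_onI by simp
  have ia: "(\<lambda>x. indicator \<Omega> x *\<^sub>R (\<psi> x * D\<eta> x i)) = a"
    by (auto simp: a_def fun_eq_iff indicator_def)
  have ib: "(\<lambda>x. indicator \<Omega> x *\<^sub>R ((G x \<bullet> i) * \<eta> x)) = b"
    by (auto simp: b_def fun_eq_iff indicator_def)
  show "set_integrable lebesgue \<Omega> (\<lambda>x. \<psi> x * D\<eta> x i)"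
    unfolding set_integrable_def ia using integrable_completion[OF am] aint by simp
  show "set_integrable lebesgue \<Omega> (\<lambda>x. (G x \<bullet> i) * \<eta> x)"
    unfolding set_integrable_def ib using integrable_completion[OF bm] bint by simp
  show "(LINT x:\<Omega>|lebesgue. \<psi> x * D\<eta> x i) = - (LINT x:\<Omega>|lebesgue. (G x \<bullet> i) * \<eta> x)"
    unfolding set_lebesgue_integral_def ia ib integral_completion[OF am] integral_completion[OF bm]
    by (rule eq)
qed



lemma phi_inv:
  fixes A :: "real \<Rightarrow> real" and q \<delta> L :: real
  assumes q: "q \<ge> 1" and Ac: "continuous_on {0..} A"
    and Ab: "\<forall>t\<ge>0. \<delta> \<le> A t \<and> A t \<le> L" and \<delta>: "\<delta> > 0"
    and Am: "strict_mono_on {0<..} (\<lambda>t. t powr q * A t)"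
    and \<phi>_def: "\<phi> = (\<lambda>t. t powr q * A t)"
    and \<psi>_def: "\<psi> = (\<lambda>y. THE t. t \<ge> 0 \<and> \<phi> t = y)"
  shows "\<And>y. y \<ge> 0 \<Longrightarrow> \<psi> y \<ge> 0 \<and> \<phi> (\<psi> y) = y"
    and "continuous_on {0..} \<psi>" and "\<psi> 0 = 0"
    and "\<And>t. t \<ge> 0 \<Longrightarrow> \<delta> * t powr q \<le> \<phi> t \<and> \<phi> t \<le> L * t powr q"
proof -
  show bnd: "\<delta> * t powr q \<le> \<phi> t \<and> \<phi> t \<le> L * t powr q" if "t \<ge> 0" for t
  proof -
    have "\<delta> \<le> A t" "A t \<le> L" "t powr q \<ge> 0" using Ab that by auto
    then have "\<delta> * t powr q \<le> A t * t powr q" "A t * t powr q \<le> L * t powr q"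
      by (intro mult_right_mono; simp)+
    then show ?thesis unfolding \<phi>_def by (simp add: mult.commute)
  qed
  have \<phi>c: "continuous_on {0..} \<phi>"
    unfolding \<phi>_def using q by (intro continuous_intros continuous_on_powr' Ac) auto
  have \<phi>0: "\<phi> 0 = 0" by (simp add: \<phi>_def)
  have mono: "\<phi> s < \<phi> t" if "0 \<le> s" "s < t" for s t
  proof (cases "s = 0")
    case True
    have "\<delta> * t powr q > 0" using \<delta> that by simp
    moreover have "\<delta> * t powr q \<le> \<phi> t" using bnd[of t] that by simp
    ultimately show ?thesis using True \<phi>0 by simp
  next
    case False
    then show ?thesis using Am that unfolding strict_mono_on_def \<phi>_def by auto
  qed
  have inj: "s = t" if "0 \<le> s" "0 \<le> t" "\<phi> s = \<phi> t" for s t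
    using mono[of s t] mono[of t s] that by (cases s t rule: linorder_cases) auto
  have big: "\<exists>T\<ge>0. \<phi> T \<ge> y" for y
  proof -
    define T where "T = max 1 (y / \<delta>)"
    have T1: "T \<ge> 1" by (simp add: T_def)
    have "T powr 1 \<le> T powr q" using T1 q by (intro powr_mono) auto
    then have "T powr q \<ge> y / \<delta>" using T1 by (simp add: T_def)
    then have "\<delta> * T powr q \<ge> y" using \<delta> by (simp add: field_simps)
    then show ?thesis using bnd[of T] T1 by (intro exI[of _ T]) auto
  qed
  show ex: "\<psi> y \<ge> 0 \<and> \<phi> (\<psi> y) = y" if yy: "y \<ge> 0" for y
  proof -
    obtain T where T: "T \<ge> 0" "\<phi> T \<ge> y" using big by blast
    obtain t where t: "0 \<le> t" "t \<le> T" "\<phi> t = y"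
      using IVT'[of \<phi> 0 y T] T yy \<phi>0 continuous_on_subset[OF \<phi>c] by auto
    have "\<psi> y = t" unfolding \<psi>_def
      by (rule the_equality) (use t inj in auto)
    then show ?thesis using t by simp
  qed
  show "\<psi> 0 = 0" using ex[of 0] inj[of "\<psi> 0" 0] \<phi>0 by simp
  show "continuous_on {0..} \<psi>"
  proof (rule continuous_on_eq_continuous_within[THEN iffD2], intro ballI)
    fix y0 :: real assume y0: "y0 \<in> {0..}"
    obtain T where T: "T \<ge> 0" "\<phi> T \<ge> y0 + 1" using big by blast
    have img: "\<phi> ` {0..T} = {0..\<phi> T}"
    proof
      show "\<phi> ` {0..T} \<subseteq> {0..\<phi> T}"
        using mono \<phi>0 by (force simp: le_less)
      show "{0..\<phi> T} \<subseteq> \<phi> ` {0..T}"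
      proof
        fix y assume y: "y \<in> {0..\<phi> T}"
        then obtain t where "0 \<le> t" "t \<le> T" "\<phi> t = y"
          using IVT'[of \<phi> 0 y T] T \<phi>0 continuous_on_subset[OF \<phi>c] by auto
        then show "y \<in> \<phi> ` {0..T}" by auto
      qed
    qed
    have inv: "\<forall>x\<in>{0..T}. \<psi> (\<phi> x) = x"
    proof
      fix x assume x: "x \<in> {0..T}"
      have "\<phi> x \<ge> 0" using bnd[of x] x \<delta> by (smt (verit) atLeastAtMost_iff mult_nonneg_nonneg powr_ge_zero)
      then show "\<psi> (\<phi> x) = x" using ex[of "\<phi> x"] inj[of "\<psi> (\<phi> x)" x] x by auto
    qed
    have "continuous_on {0..\<phi> T} \<psi>"
      using continuous_on_inv[OF continuous_on_subset[OF \<phi>c] compact_Icc inv] img by auto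
    then have c1: "continuous (at y0 within {0..\<phi> T}) \<psi>"
      using y0 T by (simp add: continuous_on_eq_continuous_within)
    have "at y0 within {0..} = at y0 within {0..\<phi> T}"
      by (rule at_within_nhd[of _ "{..<\<phi> T}"]) (use T y0 in auto)
    then show "continuous (at y0 within {0..}) \<psi>" using c1 by simp
  qed
qed



lemma radial_has_derivative:
  fixes x0 x :: "'a::euclidean_space"
  assumes d: "(\<Phi> has_real_derivative d) (at (norm (x - x0)))" and x: "x \<noteq> x0"
  shows "((\<lambda>y. \<Phi> (norm (y - x0))) has_derivative (\<lambda>h. ((d / norm (x - x0)) *\<^sub>R (x - x0)) \<bullet> h)) (at x)"
proof -
  have n: "(norm has_derivative (\<lambda>h. h \<bullet> sgn (x - x0))) (at (x - x0))"
    using has_derivative_norm[of "x - x0"] x by simp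
  have "((\<lambda>y. y - x0) has_derivative (\<lambda>h. h)) (at x)"
    by (auto intro!: derivative_eq_intros)
  from has_derivative_compose[OF this n]
  have "((\<lambda>y. norm (y - x0)) has_derivative (\<lambda>h. h \<bullet> sgn (x - x0))) (at x)" .
  from has_derivative_compose[OF this d[unfolded has_field_derivative_def]]
  have "((\<lambda>y. \<Phi> (norm (y - x0))) has_derivative (\<lambda>h. d * (h \<bullet> sgn (x - x0)))) (at x)" .
  moreover have "(\<lambda>h. d * (h \<bullet> sgn (x - x0))) = (\<lambda>h. ((d / norm (x - x0)) *\<^sub>R (x - x0)) \<bullet> h)"
    by (auto simp: fun_eq_iff sgn_div_norm inner_commute divide_inverse)
  ultimately show ?thesis by simp
qed

lemma V_props:
  fixes w :: "real \<Rightarrow> real" and c1 c2 \<beta> R :: real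
  assumes R: "R > 0" and \<beta>: "\<beta> > -1" and wc: "continuous_on {0<..<R} w" and c1: "c1 \<ge> 0"
    and wb: "\<And>s. 0 \<le> s \<Longrightarrow> s < R \<Longrightarrow> c1 * s powr \<beta> \<le> w s \<and> w s \<le> c2 * s powr \<beta>"
  shows "\<And>r. 0 \<le> r \<Longrightarrow> r < R \<Longrightarrow> w integrable_on {0..r}"
    and "\<And>r. 0 \<le> r \<Longrightarrow> r < R \<Longrightarrow> c1 * (r powr (\<beta>+1) / (\<beta>+1)) \<le> integral {0..r} w \<and>
            integral {0..r} w \<le> c2 * (r powr (\<beta>+1) / (\<beta>+1))"
    and "\<And>r. 0 < r \<Longrightarrow> r < R \<Longrightarrow> ((\<lambda>s. integral {0..s} w) has_real_derivative w r) (at r)"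
proof -
  have pint: "((\<lambda>s. c * s powr \<beta>) has_integral (c * (r powr (\<beta>+1) / (\<beta>+1)))) {0..r}" if "r \<ge> 0" for r c
    using has_integral_mult_right[OF has_integral_powr_from_0[OF \<beta> that], of c] by simp
  show wint: "w integrable_on {0..r}" if r: "0 \<le> r" "r < R" for r
  proof -
    have m: "w \<in> borel_measurable (lebesgue_on {0<..r})"
      by (rule continuous_imp_measurable_on_sets_lebesgue[OF continuous_on_subset[OF wc]]) (use r in auto)
    have g: "(\<lambda>s. c2 * s powr \<beta>) integrable_on {0<..r}"
    proof (rule integrable_spike_set[where S="{0..r}"])
      show "(\<lambda>s. c2 * s powr \<beta>) integrable_on {0..r}" using pint[OF r(1)] by blast
      show "negligible {x \<in> {0..r} - {0<..r}. c2 * x powr \<beta> \<noteq> 0}"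
        by (rule negligible_subset[of "{0}"]) auto
      show "negligible {x \<in> {0<..r} - {0..r}. c2 * x powr \<beta> \<noteq> 0}"
        by (rule negligible_subset[of "{}"]) auto
    qed
    have "w integrable_on {0<..r}"
    proof (rule measurable_bounded_by_integrable_imp_integrable_real[OF m g])
      fix x assume x: "x \<in> {0<..r}"
      then have "c1 * x powr \<beta> \<le> w x \<and> w x \<le> c2 * x powr \<beta>" using wb[of x] r by auto
      moreover have "0 \<le> c1 * x powr \<beta>" using c1 by simp
      ultimately show "\<bar>w x\<bar> \<le> c2 * x powr \<beta>" by linarith
    qed simp
    then show ?thesis
    proof (rule integrable_spike_set)
      show "negligible {x \<in> {0<..r} - {0..r}. w x \<noteq> 0}"
        by (rule negligible_subset[of "{}"]) auto
      show "negligible {x \<in> {0..r} - {0<..r}. w x \<noteq> 0}"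
        by (rule negligible_subset[of "{0}"]) auto
    qed
  qed
  show "c1 * (r powr (\<beta>+1) / (\<beta>+1)) \<le> integral {0..r} w \<and> integral {0..r} w \<le> c2 * (r powr (\<beta>+1) / (\<beta>+1))"
    if r: "0 \<le> r" "r < R" for r
  proof
    show "c1 * (r powr (\<beta>+1) / (\<beta>+1)) \<le> integral {0..r} w"
      using has_integral_le[OF pint[OF r(1)] integrable_integral[OF wint[OF r]]] wb r by auto
    show "integral {0..r} w \<le> c2 * (r powr (\<beta>+1) / (\<beta>+1))"
      using has_integral_le[OF integrable_integral[OF wint[OF r]] pint[OF r(1)]] wb r by auto
  qed
  show "((\<lambda>s. integral {0..s} w) has_real_derivative w r) (at r)" if r: "0 < r" "r < R" for r
  proof -
    define r0 where "r0 = r / 2"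
    define R' where "R' = (r + R) / 2"
    have r0: "0 < r0" "r0 < r" unfolding r0_def using r by simp_all
    have R': "r < R'" "R' < R" unfolding R'_def using r by simp_all
    have sub: "{r0..R'} \<subseteq> {0<..<R}" using r0 R' by auto
    have "((\<lambda>s. integral {r0..s} w) has_vector_derivative w r) (at r within {r0..R'})"
      by (rule integral_has_vector_derivative[OF continuous_on_subset[OF wc sub]]) (use r0 R' in simp)
    moreover have "at r within {r0..R'} = at r"
      by (rule at_within_interior) (use r0 R' in simp)
    ultimately have "((\<lambda>s. integral {r0..s} w) has_vector_derivative w r) (at r)" by simp
    then have "((\<lambda>s. integral {0..r0} w + integral {r0..s} w) has_vector_derivative (0 + w r)) (at r)"
      by (rule has_vector_derivative_add[OF has_vector_derivative_const])
    then have "((\<lambda>s. integral {0..r0} w + integral {r0..s} w) has_real_derivative w r) (at r)"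
      by (simp add: has_real_derivative_iff_has_vector_derivative)
    then show ?thesis
    proof (rule has_field_derivative_transform_within_open[where S="{r0<..<R'}"])
      show "open {r0<..<R'}" by simp
      show "r \<in> {r0<..<R'}" using r0 R' by simp
      fix s assume s: "s \<in> {r0<..<R'}"
      have "w integrable_on {0..s}" by (rule wint) (use s r0 R' in auto)
      then show "integral {0..r0} w + integral {r0..s} w = integral {0..s} w"
        by (rule Henstock_Kurzweil_Integration.integral_combine[rotated 2]) (use s r0 in auto)
    qed
  qed
qed



lemma powr_sum_le:
  fixes x y q :: real
  assumes "x \<ge> 0" "y \<ge> 0" "q \<ge> 1"
  shows "x powr q + y powr q \<le> (x + y) powr q"
proof (cases "x + y = 0")
  case True
  then have "x = 0" "y = 0" using assms by auto
  then show ?thesis by simp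
next
  case False
  have aux: "z powr q \<le> z * (x + y) powr (q - 1)" if "0 \<le> z" "z \<le> x + y" for z
  proof (cases "z = 0")
    case True then show ?thesis by simp
  next
    case False
    have "z powr q = z powr 1 * z powr (q - 1)" using powr_add[of z 1 "q - 1"] by simp
    also have "\<dots> = z * z powr (q - 1)" using that by simp
    also have "\<dots> \<le> z * (x + y) powr (q - 1)"
      using that assms by (intro mult_left_mono powr_mono2) auto
    finally show ?thesis .
  qed
  have "x powr q + y powr q \<le> x * (x + y) powr (q - 1) + y * (x + y) powr (q - 1)"
    using aux[of x] aux[of y] assms by auto
  also have "\<dots> = (x + y) powr 1 * (x + y) powr (q - 1)" using assms by (simp add: algebra_simps)
  also have "\<dots> = (x + y) powr q" using powr_add[of "x + y" 1 "q - 1"] by simp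
  finally show ?thesis .
qed

lemma root_sum_le:
  fixes a B q :: real
  assumes "a \<ge> 0" "B \<ge> 0" "q \<ge> 1"
  shows "(a powr q + B) powr (1 / q) \<le> a + B powr (1 / q)"
proof -
  define b where "b = B powr (1 / q)"
  have b0: "b \<ge> 0" by (simp add: b_def)
  have Bb: "B = b powr q" using assms by (simp add: b_def powr_powr)
  have "(a powr q + B) powr (1 / q) \<le> ((a + b) powr q) powr (1 / q)"
    using powr_sum_le[OF assms(1) b0 assms(3)] assms Bb by (intro powr_mono2) auto
  also have "\<dots> = a + b" using assms b0 by (simp add: powr_powr)
  finally show ?thesis by (simp add: b_def)
qed

lemma powr_root_le:
  fixes w X q :: real
  assumes "q > 0" "w \<ge> 0" "w powr q \<le> X"
  shows "w \<le> X powr (1 / q)"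
proof -
  have "w = (w powr q) powr (1 / q)" using assms by (simp add: powr_powr)
  also have "\<dots> \<le> X powr (1 / q)" using assms by (intro powr_mono2) auto
  finally show ?thesis .
qed

lemma powr_root_ge:
  fixes w X q :: real
  assumes "q > 0" "w \<ge> 0" "X \<le> w powr q" "X \<ge> 0"
  shows "X powr (1 / q) \<le> w"
proof -
  have "X powr (1 / q) \<le> (w powr q) powr (1 / q)" using assms by (intro powr_mono2) auto
  also have "\<dots> = w" using assms by (simp add: powr_powr)
  finally show ?thesis .
qed

lemma Lp_loc_cont:
  fixes u :: "'a::euclidean_space \<Rightarrow> 'b::euclidean_space"
  assumes "continuous_on \<Omega> u" "p > 0"
  shows "Lp_loc p \<Omega> u"
  unfolding Lp_loc_def
proof (intro allI impI conjI)
  fix K assume K: "compact K \<and> K \<subseteq> \<Omega>"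
  have cK: "continuous_on K u" using K assms continuous_on_subset by blast
  have "integrable lborel (\<lambda>x. indicator K x *\<^sub>R u x)"
    by (rule borel_integrable_compact) (use K cK in auto)
  then have "(\<lambda>x. indicator K x *\<^sub>R u x) \<in> borel_measurable lborel" by auto
  then show "set_borel_measurable lebesgue K u"
    unfolding set_borel_measurable_def by (rule measurable_completion)
  have cK2: "continuous_on K (\<lambda>x. norm (u x) powr p)"
    by (rule continuous_on_powr'[OF continuous_on_norm[OF cK]]) (use assms in auto)
  have i2: "integrable lborel (\<lambda>x. indicator K x *\<^sub>R (norm (u x) powr p))"
    by (rule borel_integrable_compact) (use K cK2 in auto)
  then have "(\<lambda>x. indicator K x *\<^sub>R (norm (u x) powr p)) \<in> borel_measurable lborel" by auto
  then show "set_integrable lebesgue K (\<lambda>x. norm (u x) powr p)"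
    unfolding set_integrable_def using integrable_completion i2 by blast
qed

lemma test_unpack:
  fixes \<eta> :: "'a::euclidean_space \<Rightarrow> real"
  assumes "test_fun \<Omega> \<eta>"
  shows "\<And>x. (\<eta> has_derivative frechet_derivative \<eta> (at x)) (at x)"
    and "\<And>b. b \<in> Basis \<Longrightarrow> continuous_on UNIV (\<lambda>x. frechet_derivative \<eta> (at x) b)"
    and "compact (closure {x. \<eta> x \<noteq> 0})" "closure {x. \<eta> x \<noteq> 0} \<subseteq> \<Omega>"
    and "\<And>x. x \<notin> closure {x. \<eta> x \<noteq> 0} \<Longrightarrow> \<eta> x = 0"
proof -
  have all: "smooth_fun \<eta> \<and> compact (closure {x. \<eta> x \<noteq> 0}) \<and> closure {x. \<eta> x \<noteq> 0} \<subseteq> \<Omega>"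
    using assms unfolding test_fun_def .
  then have sm: "smooth_fun \<eta>" by (rule conjunct1)
  have dp: "(\<forall>x. \<eta> differentiable (at x)) \<and> (\<forall>b\<in>Basis. smooth_fun (\<lambda>x. frechet_derivative \<eta> (at x) b))"
    using iffD1[OF smooth_fun.simps sm] by simp
  then have d: "\<forall>x. \<eta> differentiable (at x)"
    and p: "\<forall>b\<in>Basis. smooth_fun (\<lambda>x. frechet_derivative \<eta> (at x) b)" by (rule conjunct1, rule conjunct2)
  show "(\<eta> has_derivative frechet_derivative \<eta> (at x)) (at x)" for x
    using d frechet_derivative_works by blast
  show "continuous_on UNIV (\<lambda>x. frechet_derivative \<eta> (at x) b)" if "b \<in> Basis" for b
  proof -
    have "smooth_fun (\<lambda>x. frechet_derivative \<eta> (at x) b)" using p that by (rule bspec)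
    from iffD1[OF smooth_fun.simps this]
    have "\<forall>x. (\<lambda>x. frechet_derivative \<eta> (at x) b) differentiable (at x)" by simp
    then show ?thesis
      by (simp add: continuous_at_imp_continuous_on differentiable_imp_continuous_within)
  qed
  show "compact (closure {x. \<eta> x \<noteq> 0})" "closure {x. \<eta> x \<noteq> 0} \<subseteq> \<Omega>" using all by simp_all
  show "\<eta> x = 0" if "x \<notin> closure {x. \<eta> x \<noteq> 0}" for x
    using that closure_subset[of "{x. \<eta> x \<noteq> 0}"] by auto
qed

lemma flux_div:
  fixes x0 :: "'a::euclidean_space" and C M :: real
  assumes \<Phi>_def: "\<Phi> = (\<lambda>r. C * r powr (- real DIM('a)) - M / real DIM('a))"
    and \<Phi>'_def: "\<Phi>' = (\<lambda>r. C * (- real DIM('a) * r powr (- real DIM('a) - 1)))"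
    and G_def: "G = (\<lambda>b x. \<Phi> (norm (x - x0)) *\<^sub>R b + ((x - x0) \<bullet> b) *\<^sub>R ((\<Phi>' (norm (x - x0)) / norm (x - x0)) *\<^sub>R (x - x0)))"
  shows "\<And>b x. x \<noteq> x0 \<Longrightarrow> ((\<lambda>y. \<Phi> (norm (y - x0)) * ((y - x0) \<bullet> b)) has_derivative (\<lambda>h. G b x \<bullet> h)) (at x)"
    and "\<And>b. continuous_on (- {x0}) (\<lambda>x. G b x \<bullet> b)"
    and "\<And>x. x \<noteq> x0 \<Longrightarrow> (\<Sum>b\<in>Basis. G b x \<bullet> b) = - M"
proof -
  have dP: "(\<Phi> has_real_derivative \<Phi>' r) (at r)" if "r > 0" for r
    unfolding \<Phi>_def \<Phi>'_def using that by (auto intro!: derivative_eq_intros)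
  show "((\<lambda>y. \<Phi> (norm (y - x0)) * ((y - x0) \<bullet> b)) has_derivative (\<lambda>h. G b x \<bullet> h)) (at x)"
    if x: "x \<noteq> x0" for b x
  proof -
    have r: "norm (x - x0) > 0" using x by simp
    have d1: "((\<lambda>y. \<Phi> (norm (y - x0))) has_derivative (\<lambda>h. ((\<Phi>' (norm (x - x0)) / norm (x - x0)) *\<^sub>R (x - x0)) \<bullet> h)) (at x)"
      by (rule radial_has_derivative[OF dP[OF r] x])
    have d2: "((\<lambda>y. (y - x0) \<bullet> b) has_derivative (\<lambda>h. h \<bullet> b)) (at x)"
      by (auto intro!: derivative_eq_intros)
    from has_derivative_mult[OF d1 d2]
    show ?thesis
      by (rule has_derivative_eq_rhs) (auto simp: G_def fun_eq_iff inner_add_left algebra_simps inner_commute)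
  qed
  show "continuous_on (- {x0}) (\<lambda>x. G b x \<bullet> b)" for b
    unfolding G_def \<Phi>_def \<Phi>'_def
    by (intro continuous_intros) auto
  show "(\<Sum>b\<in>Basis. G b x \<bullet> b) = - M" if x: "x \<noteq> x0" for x
  proof -
    define r where "r = norm (x - x0)"
    define n where "n = real DIM('a)"
    have r: "r > 0" using x by (simp add: r_def)
    have n: "n > 0" by (simp add: n_def)
    have sq: "(\<Sum>b\<in>Basis. ((x - x0) \<bullet> b) * ((x - x0) \<bullet> b)) = r * r"
      using euclidean_inner[of "x - x0" "x - x0"] by (simp add: r_def power2_norm_eq_inner[symmetric] power2_eq_square)
    define d where "d = x - x0"
    have Gb: "G b x = \<Phi> r *\<^sub>R b + (d \<bullet> b) *\<^sub>R ((\<Phi>' r / r) *\<^sub>R d)" for b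
      unfolding G_def r_def d_def by simp
    have Gbb: "G b x \<bullet> b = \<Phi> r + (\<Phi>' r / r) * ((d \<bullet> b) * (d \<bullet> b))" if "b \<in> Basis" for b
      unfolding Gb inner_add_left inner_scaleR_left using that by (simp add: inner_Basis)
    have "(\<Sum>b\<in>Basis. G b x \<bullet> b) = (\<Sum>b\<in>Basis. \<Phi> r + (\<Phi>' r / r) * (((x - x0) \<bullet> b) * ((x - x0) \<bullet> b)))"
      by (rule sum.cong) (auto simp: Gbb d_def)
    also have "\<dots> = (\<Sum>b\<in>(Basis::'a set). \<Phi> r) + (\<Phi>' r / r) * (\<Sum>b\<in>Basis. ((x - x0) \<bullet> b) * ((x - x0) \<bullet> b))"
      by (simp add: sum.distrib sum_distrib_left)
    also have "\<dots> = n * \<Phi> r + (\<Phi>' r / r) * (r * r)"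
      by (simp only: sq) (simp add: n_def)
    also have "\<dots> = n * \<Phi> r + \<Phi>' r * r" using r by simp
    also have "r powr (- n - 1) * r = r powr (- n)"
      using powr_add[of r "- n - 1" 1] r by simp
    then have "n * \<Phi> r + \<Phi>' r * r = - M"
      unfolding \<Phi>_def \<Phi>'_def n_def[symmetric] using n
      by (simp add: algebra_simps)
    finally show ?thesis .
  qed
qed



lemma Linf_facts:
  fixes f :: "'a::euclidean_space \<Rightarrow> real"
  assumes "Linf_on S f"
  shows "Linf_norm S f \<ge> 0" and "AE x in lebesgue. x \<in> S \<longrightarrow> \<bar>f x\<bar> \<le> Linf_norm S f"
proof -
  define Cs where "Cs = {C. C \<ge> 0 \<and> (AE x in lebesgue. x \<in> S \<longrightarrow> \<bar>f x\<bar> \<le> C)}"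
  have M: "Linf_norm S f = Inf Cs" by (simp add: Linf_norm_def Cs_def)
  obtain C0 where C0: "AE x in lebesgue. x \<in> S \<longrightarrow> \<bar>f x\<bar> \<le> C0"
    using assms by (auto simp: Linf_on_def)
  have "max C0 0 \<in> Cs" unfolding Cs_def
    by (auto intro: eventually_mono[OF C0])
  then have ne: "Cs \<noteq> {}" by blast
  have ge: "\<And>C. C \<in> Cs \<Longrightarrow> 0 \<le> C" by (simp add: Cs_def)
  show M0: "Linf_norm S f \<ge> 0" unfolding M by (rule cInf_greatest[OF ne ge])
  have bdd: "bdd_below Cs" unfolding bdd_below_def using ge by blast
  have k: "AE x in lebesgue. x \<in> S \<longrightarrow> \<bar>f x\<bar> \<le> Inf Cs + inverse (real (Suc k))" for k
  proof -
    have "Inf Cs < Inf Cs + inverse (real (Suc k))" by simp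
    from cInf_lessD[OF ne this] obtain C where "C \<in> Cs" "C < Inf Cs + inverse (real (Suc k))" by blast
    then show ?thesis unfolding Cs_def by (auto elim: eventually_mono)
  qed
  then have "AE x in lebesgue. \<forall>k. x \<in> S \<longrightarrow> \<bar>f x\<bar> \<le> Inf Cs + inverse (real (Suc k))"
    unfolding AE_all_countable using k by blast
  then show "AE x in lebesgue. x \<in> S \<longrightarrow> \<bar>f x\<bar> \<le> Linf_norm S f"
  proof (rule eventually_mono)
    fix x assume H: "\<forall>k. x \<in> S \<longrightarrow> \<bar>f x\<bar> \<le> Inf Cs + inverse (real (Suc k))"
    show "x \<in> S \<longrightarrow> \<bar>f x\<bar> \<le> Linf_norm S f"
    proof (intro impI, rule ccontr)
      assume xS: "x \<in> S" and "\<not> \<bar>f x\<bar> \<le> Linf_norm S f"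
      then have "0 < \<bar>f x\<bar> - Inf Cs" unfolding M by simp
      from reals_Archimedean[OF this] obtain k where "inverse (real (Suc k)) < \<bar>f x\<bar> - Inf Cs" by blast
      moreover have "\<bar>f x\<bar> \<le> Inf Cs + inverse (real (Suc k))" using H xS by blast
      ultimately show False by linarith
    qed
  qed
qed

lemma set_cong_both:
  assumes "\<And>x. x \<in> A \<Longrightarrow> f x = g x"
  shows "set_integrable M A f \<longleftrightarrow> set_integrable M A g"
    and "(LINT x:A|M. f x) = (LINT x:A|M. g x)"
proof -
  have e: "(\<lambda>x. indicator A x *\<^sub>R f x) = (\<lambda>x. indicator A x *\<^sub>R g x)"
    using assms by (auto simp: fun_eq_iff indicator_def)
  show "set_integrable M A f \<longleftrightarrow> set_integrable M A g" unfolding set_integrable_def e ..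
  show "(LINT x:A|M. f x) = (LINT x:A|M. g x)" unfolding set_lebesgue_integral_def e ..
qed

lemma set_sum_both:
  fixes f :: "'i \<Rightarrow> 'a \<Rightarrow> real"
  assumes "finite I" "\<And>i. i \<in> I \<Longrightarrow> set_integrable M A (f i)"
  shows "set_integrable M A (\<lambda>x. \<Sum>i\<in>I. f i x)"
    and "(LINT x:A|M. (\<Sum>i\<in>I. f i x)) = (\<Sum>i\<in>I. LINT x:A|M. f i x)"
proof -
  have e: "(\<lambda>x. indicator A x *\<^sub>R (\<Sum>i\<in>I. f i x)) = (\<lambda>x. \<Sum>i\<in>I. indicator A x *\<^sub>R f i x)"
    by (simp add: sum_distrib_left)
  have i: "integrable M (\<lambda>x. indicator A x *\<^sub>R f i x)" if "i \<in> I" for i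
    using assms(2)[OF that] by (simp add: set_integrable_def)
  show "set_integrable M A (\<lambda>x. \<Sum>i\<in>I. f i x)"
    unfolding set_integrable_def e using i by (intro Bochner_Integration.integrable_sum) auto
  show "(LINT x:A|M. (\<Sum>i\<in>I. f i x)) = (\<Sum>i\<in>I. LINT x:A|M. f i x)"
    unfolding set_lebesgue_integral_def e using i by (intro Bochner_Integration.integral_sum) auto
qed

lemma cs_set_integrable:
  fixes \<eta> :: "'a::euclidean_space \<Rightarrow> real"
  assumes "continuous_on UNIV \<eta>" "compact S" "S \<subseteq> \<Omega>" "\<And>x. x \<notin> S \<Longrightarrow> \<eta> x = 0"
  shows "set_integrable lebesgue \<Omega> \<eta>" and "integrable lebesgue \<eta>"
proof -
  have i: "integrable lborel \<eta>" by (rule cs_integrable[OF assms(1,2,4)])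
  have m: "\<eta> \<in> borel_measurable lborel" using assms(1) by (simp add: borel_measurable_continuous_onI)
  show il: "integrable lebesgue \<eta>" using integrable_completion[OF m] i by simp
  have e: "(\<lambda>x. indicator \<Omega> x *\<^sub>R \<eta> x) = \<eta>"
    using assms(3,4) by (auto simp: fun_eq_iff indicator_def)
  show "set_integrable lebesgue \<Omega> \<eta>" unfolding set_integrable_def e by (rule il)
qed

lemma f_eta_int:
  fixes f \<eta> :: "'a::euclidean_space \<Rightarrow> real"
  assumes fL: "Linf_on B f" and sub: "\<Omega> \<subseteq> B" and \<Omega>: "open \<Omega>"
    and \<eta>c: "continuous_on UNIV \<eta>" and S: "compact S" "S \<subseteq> \<Omega>" and \<eta>0: "\<And>x. x \<notin> S \<Longrightarrow> \<eta> x = 0"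
  shows "set_integrable lebesgue \<Omega> (\<lambda>x. f x * \<eta> x)"
proof -
  define M where "M = Linf_norm B f"
  have AEf: "AE x in lebesgue. x \<in> B \<longrightarrow> \<bar>f x\<bar> \<le> M" using Linf_facts(2)[OF fL] by (simp add: M_def)
  have M0: "M \<ge> 0" using Linf_facts(1)[OF fL] by (simp add: M_def)
  have il: "integrable lebesgue \<eta>" by (rule cs_set_integrable(2)[OF \<eta>c S \<eta>0])
  have i2: "integrable lebesgue (\<lambda>x. M * \<eta> x)" using il by simp
  have mB: "(\<lambda>x. indicator B x *\<^sub>R f x) \<in> borel_measurable lebesgue"
    using fL by (simp add: Linf_on_def set_borel_measurable_def)
  have m\<eta>: "\<eta> \<in> borel_measurable lebesgue"
    using \<eta>c by (intro measurable_completion) (simp add: borel_measurable_continuous_onI)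
  have \<Omega>s: "\<Omega> \<in> sets lebesgue" using \<Omega> by simp
  have eq: "(\<lambda>x. indicator \<Omega> x *\<^sub>R (f x * \<eta> x)) = (\<lambda>x. (indicator B x *\<^sub>R f x) * (indicator \<Omega> x * \<eta> x))"
    using sub by (auto simp: fun_eq_iff indicator_def)
  have mm: "(\<lambda>x. indicator \<Omega> x *\<^sub>R (f x * \<eta> x)) \<in> borel_measurable lebesgue"
    unfolding eq using mB m\<eta> \<Omega>s by measurable
  show ?thesis unfolding set_integrable_def
  proof (rule Bochner_Integration.integrable_bound[OF i2 mm])
    show "AE x in lebesgue. norm (indicator \<Omega> x *\<^sub>R (f x * \<eta> x)) \<le> norm (M * \<eta> x)"
    using AEf proof (rule eventually_mono)
      fix x assume H: "x \<in> B \<longrightarrow> \<bar>f x\<bar> \<le> M"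
      show "norm (indicator \<Omega> x *\<^sub>R (f x * \<eta> x)) \<le> norm (M * \<eta> x)"
      proof (cases "x \<in> \<Omega>")
        case True
        then have "\<bar>f x\<bar> \<le> M" using H sub by blast
        then have "\<bar>f x\<bar> * \<bar>\<eta> x\<bar> \<le> M * \<bar>\<eta> x\<bar>" by (rule mult_right_mono) simp
        then show ?thesis using True M0 by (simp add: abs_mult)
      next
        case False then show ?thesis by simp
      qed
    qed
  qed
qed



theorem lemma1:
  fixes p \<delta> L R :: real and A :: "real \<Rightarrow> real"
    and x0 :: "'a::euclidean_space" and f :: "'a \<Rightarrow> real"
  assumes n2: "DIM('a) \<ge> 2"
    and pn: "p > real DIM('a)"
    and A_cont: "continuous_on {0..} A"
    and \<delta>pos: "\<delta> > 0" and Lpos: "L > 0"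
    and A_bounds: "\<forall>t\<ge>0. \<delta> \<le> A t \<and> A t \<le> L"
    and A_mono: "strict_mono_on {0<..} (\<lambda>t. t powr (p - 1) * A t)"
    and Rpos: "R > 0"
    and f_Linf: "Linf_on (ball x0 R) f"
  shows "\<exists>v :: real \<Rightarrow> 'a \<Rightarrow> real. \<forall>a\<ge>0.
     (\<forall>x y. dist x x0 = dist y x0 \<longrightarrow> v a x = v a y) \<and>
     weak_supersolution p A f (ball x0 R - {x0}) (v a) \<and>
     (\<forall>x\<in>ball x0 R.
        let \<alpha> = (p - real DIM('a)) / (p - 1) in
        (1 / L) powr (1 / (p - 1)) * a * (norm (x - x0) powr \<alpha> / \<alpha>) \<le> v a x \<and>
        v a x \<le> (1 / \<delta>) powr (1 / (p - 1)) *
          (a + (R ^ DIM('a) * Linf_norm (ball x0 R) f / real DIM('a)) powr (1 / (p - 1))) *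
          (norm (x - x0) powr \<alpha> / \<alpha>))"
proof -
  define n where "n = real DIM('a)"
  define q where "q = p - 1"
  have n2': "n \<ge> 2" using n2 by (simp add: n_def)
  have q1: "q \<ge> 1" and q0: "q > 0" using pn n2' by (auto simp: q_def n_def)
  define \<alpha> where "\<alpha> = (p - n) / (p - 1)"
  define \<beta> where "\<beta> = (1 - n) / q"
  have \<alpha>0: "\<alpha> > 0" using pn q0 by (simp add: \<alpha>_def n_def q_def)
  have h\<beta>: "\<beta> + 1 = \<alpha>" using q0 by (simp add: \<alpha>_def \<beta>_def q_def field_simps)
  have \<beta>1: "\<beta> > -1" using h\<beta> \<alpha>0 by simp
  define \<phi> where "\<phi> = (\<lambda>t. t powr q * A t)"
  define \<psi> where "\<psi> = (\<lambda>y. THE t. t \<ge> 0 \<and> \<phi> t = y)"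
  have Am': "strict_mono_on {0<..} (\<lambda>t. t powr q * A t)" using A_mono by (simp add: q_def)
  note PI = phi_inv[OF q1 A_cont A_bounds \<delta>pos Am' \<phi>_def \<psi>_def]
  define M where "M = Linf_norm (ball x0 R) f"
  have M0: "M \<ge> 0" using Linf_facts(1)[OF f_Linf] by (simp add: M_def)
  define Cc where "Cc a = a powr q + R ^ DIM('a) * M / n" for a
  define hh where "hh a r = (Cc a - M * r ^ DIM('a) / n) * r powr (1 - n)" for a r
  define w where "w a r = \<psi> (max 0 (hh a r))" for a r
  define v where "v a x = integral {0..norm (x - x0)} (w a)" for a x
  define g where "g a x = (w a (norm (x - x0)) / norm (x - x0)) *\<^sub>R (x - x0)" for a x
  define \<Omega> where "\<Omega> = ball x0 R - {x0}"
  have \<Omega>open: "open \<Omega>" unfolding \<Omega>_def by auto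
  have \<Omega>r: "0 < norm (x - x0) \<and> norm (x - x0) < R" if "x \<in> \<Omega>" for x
    using that by (auto simp: \<Omega>_def dist_norm norm_minus_commute)
  have n0: "n > 0" using n2' by simp
  show ?thesis
  proof (rule exI[of _ v], intro allI impI)
    fix a :: real assume a0: "a \<ge> 0"
    define c1 where "c1 = (1 / L) powr (1 / q) * a"
    define c2 where "c2 = (Cc a / \<delta>) powr (1 / q)"
    have c10: "c1 \<ge> 0" using a0 by (simp add: c1_def)
    have Cc0: "Cc a \<ge> 0" using M0 Rpos n0 by (simp add: Cc_def)
    have hc: "continuous_on {0<..<R} (\<lambda>r. max 0 (hh a r))"
      unfolding hh_def using n0 by (intro continuous_intros) auto
    have wc: "continuous_on {0<..<R} (w a)"
      unfolding w_def by (rule continuous_on_compose2[OF PI(2) hc]) auto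
    have hlow: "a powr q * s powr (1 - n) \<le> hh a s" if s: "0 < s" "s < R" for s
    proof -
      have "s ^ DIM('a) \<le> R ^ DIM('a)" using s by (intro power_mono) auto
      then have "M * s ^ DIM('a) / n \<le> R ^ DIM('a) * M / n"
        using M0 n0 by (simp add: divide_right_mono mult.commute mult_left_mono)
      then have "a powr q \<le> Cc a - M * s ^ DIM('a) / n" by (simp add: Cc_def)
      then show ?thesis unfolding hh_def by (rule mult_right_mono) simp
    qed
    have hup: "hh a s \<le> Cc a * s powr (1 - n)" if s: "0 < s" for s
    proof -
      have "0 \<le> M * s ^ DIM('a) / n" using M0 n0 s by simp
      then have "Cc a - M * s ^ DIM('a) / n \<le> Cc a" by simp
      then show ?thesis unfolding hh_def by (rule mult_right_mono) simp
    qed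
    have w\<phi>: "w a s \<ge> 0 \<and> \<phi> (w a s) = hh a s" if s: "0 < s" "s < R" for s
    proof -
      have "0 \<le> a powr q * s powr (1 - n)" by simp
      then have "hh a s \<ge> 0" using hlow[OF s] by linarith
      then show ?thesis using PI(1)[of "hh a s"] by (simp add: w_def)
    qed
    have w0: "w a 0 = 0" using PI(3) n2' by (simp add: w_def hh_def)
    have wb: "c1 * s powr \<beta> \<le> w a s \<and> w a s \<le> c2 * s powr \<beta>" if s: "0 \<le> s" "s < R" for s
    proof (cases "s = 0")
      case True then show ?thesis using w0 by simp
    next
      case False
      then have s': "0 < s" "s < R" using s by auto
      define W where "W = w a s"
      have W0: "W \<ge> 0" and \<phi>W: "\<phi> W = hh a s" using w\<phi>[OF s'] by (auto simp: W_def)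
      have bW: "\<delta> * W powr q \<le> \<phi> W \<and> \<phi> W \<le> L * W powr q" using PI(4)[OF W0] .
      have pb: "(s powr (1 - n)) powr (1 / q) = s powr \<beta>" by (simp add: powr_powr \<beta>_def)
      have up: "W powr q \<le> (Cc a / \<delta>) * s powr (1 - n)"
      proof -
        have "\<delta> * W powr q \<le> Cc a * s powr (1 - n)" using bW \<phi>W hup[OF s'(1)] by linarith
        then show ?thesis using \<delta>pos by (simp add: field_simps)
      qed
      have "W \<le> ((Cc a / \<delta>) * s powr (1 - n)) powr (1 / q)"
        by (rule powr_root_le[OF q0 W0 up])
      also have "\<dots> = c2 * s powr \<beta>" by (simp only: powr_mult c2_def pb)
      finally have U: "W \<le> c2 * s powr \<beta>" .
      have lo: "(1 / L) * (a powr q * s powr (1 - n)) \<le> W powr q"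
      proof -
        have "a powr q * s powr (1 - n) \<le> L * W powr q" using bW \<phi>W hlow[OF s'] by linarith
        then show ?thesis using Lpos by (simp add: field_simps)
      qed
      have "((1 / L) * (a powr q * s powr (1 - n))) powr (1 / q) \<le> W"
        by (rule powr_root_ge[OF q0 W0 lo]) (use Lpos in simp)
      moreover have "((1 / L) * (a powr q * s powr (1 - n))) powr (1 / q) = c1 * s powr \<beta>"
      proof -
        have aq: "(a powr q) powr (1 / q) = a" using q0 a0 by (simp add: powr_powr)
        show ?thesis by (simp only: powr_mult pb aq c1_def mult.assoc)
      qed
      ultimately have Lo: "c1 * s powr \<beta> \<le> W" by simp
      show ?thesis using U Lo by (simp add: W_def)
    qed
    have VP2: "c1 * (r powr (\<beta>+1) / (\<beta>+1)) \<le> integral {0..r} (w a) \<and>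
            integral {0..r} (w a) \<le> c2 * (r powr (\<beta>+1) / (\<beta>+1))" if "0 \<le> r" "r < R" for r
      by (rule V_props(2)[OF Rpos \<beta>1 wc c10]) (use wb that in auto)
    have VP3: "((\<lambda>s. integral {0..s} (w a)) has_real_derivative w a r) (at r)" if "0 < r" "r < R" for r
      by (rule V_props(3)[OF Rpos \<beta>1 wc c10]) (use wb that in auto)
    have R1: "\<forall>x y. dist x x0 = dist y x0 \<longrightarrow> v a x = v a y"
      by (simp add: v_def dist_norm)
    have R3: "\<forall>x\<in>ball x0 R.
        let \<alpha> = (p - real DIM('a)) / (p - 1) in
        (1 / L) powr (1 / (p - 1)) * a * (norm (x - x0) powr \<alpha> / \<alpha>) \<le> v a x \<and>
        v a x \<le> (1 / \<delta>) powr (1 / (p - 1)) *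
          (a + (R ^ DIM('a) * Linf_norm (ball x0 R) f / real DIM('a)) powr (1 / (p - 1))) *
          (norm (x - x0) powr \<alpha> / \<alpha>)"
    proof (intro ballI, unfold Let_def)
      fix x assume x: "x \<in> ball x0 R"
      define r where "r = norm (x - x0)"
      have r: "0 \<le> r" "r < R" using x by (auto simp: r_def dist_norm norm_minus_commute)
      have B: "c1 * (r powr \<alpha> / \<alpha>) \<le> v a x \<and> v a x \<le> c2 * (r powr \<alpha> / \<alpha>)"
        using VP2[OF r] by (simp add: v_def r_def h\<beta>)
      have c2le: "c2 \<le> (1 / \<delta>) powr (1 / q) * (a + (R ^ DIM('a) * M / n) powr (1 / q))"
      proof -
        have "c2 = (1 / \<delta>) powr (1 / q) * (Cc a) powr (1 / q)"
          by (simp add: c2_def powr_mult[symmetric])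
        also have "\<dots> \<le> (1 / \<delta>) powr (1 / q) * (a + (R ^ DIM('a) * M / n) powr (1 / q))"
          unfolding Cc_def
          by (intro mult_left_mono root_sum_le) (use a0 M0 Rpos n0 q1 in auto)
        finally show ?thesis .
      qed
      have rnn: "0 \<le> r powr \<alpha> / \<alpha>" using \<alpha>0 by simp
      have U: "v a x \<le> (1 / \<delta>) powr (1 / q) * (a + (R ^ DIM('a) * M / n) powr (1 / q)) * (r powr \<alpha> / \<alpha>)"
        using B mult_right_mono[OF c2le rnn] by linarith
      show "(1 / L) powr (1 / (p - 1)) * a * (norm (x - x0) powr ((p - real DIM('a)) / (p - 1)) / ((p - real DIM('a)) / (p - 1))) \<le> v a x \<and>
        v a x \<le> (1 / \<delta>) powr (1 / (p - 1)) *
          (a + (R ^ DIM('a) * Linf_norm (ball x0 R) f / real DIM('a)) powr (1 / (p - 1))) *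
          (norm (x - x0) powr ((p - real DIM('a)) / (p - 1)) / ((p - real DIM('a)) / (p - 1)))"
        using B U by (simp add: c1_def r_def \<alpha>_def q_def n_def M_def)
    qed
    have vfun: "v a = (\<lambda>y. integral {0..norm (y - x0)} (w a))" by (simp add: fun_eq_iff v_def)
    have vD: "(v a has_derivative (\<lambda>h. g a x \<bullet> h)) (at x)" if x: "x \<in> \<Omega>" for x
    proof -
      have r: "0 < norm (x - x0)" "norm (x - x0) < R" using \<Omega>r[OF x] by auto
      have xx: "x \<noteq> x0" using r by auto
      show ?thesis unfolding vfun g_def
        by (rule radial_has_derivative[OF VP3[OF r] xx])
    qed
    have wnc: "continuous_on \<Omega> (\<lambda>x. w a (norm (x - x0)))"
      by (rule continuous_on_compose2[OF wc]) (use \<Omega>r in \<open>auto intro!: continuous_intros\<close>)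
    have gc: "continuous_on \<Omega> (g a)"
      unfolding g_def using \<Omega>r by (intro continuous_intros wnc) auto
    have vc: "continuous_on \<Omega> (v a)"
      using vD has_derivative_continuous by (meson continuous_at_imp_continuous_on)
    have p0: "p > 0" using pn n0 n_def by linarith
    have WG: "weak_gradient \<Omega> (v a) (g a)"
      unfolding weak_gradient_def
    proof (intro conjI allI impI ballI)
      show "Lp_loc 1 \<Omega> (v a)" by (rule Lp_loc_cont[OF vc]) simp
      show "Lp_loc 1 \<Omega> (g a)" by (rule Lp_loc_cont[OF gc]) simp
      fix \<eta> i assume \<eta>: "test_fun \<Omega> \<eta>" and i: "i \<in> (Basis :: 'a set)"
      note TU = test_unpack[OF \<eta>]
      have Gc: "continuous_on \<Omega> (\<lambda>x. g a x \<bullet> i)" using gc by (intro continuous_intros)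
      have ni: "norm i = 1" using i by simp
      show "(LINT x:\<Omega>|lebesgue. v a x * frechet_derivative \<eta> (at x) i) =
            - (LINT x:\<Omega>|lebesgue. (g a x \<bullet> i) * \<eta> x)"
        by (rule ibp(3)[OF \<Omega>open TU(3) TU(4) TU(5) TU(1) TU(2)[OF i] vD Gc ni])
    qed
    have LPv: "Lp_loc p \<Omega> (v a)" by (rule Lp_loc_cont[OF vc p0])
    have LPg: "Lp_loc p \<Omega> (g a)" by (rule Lp_loc_cont[OF gc p0])
    define \<Phi> where "\<Phi> = (\<lambda>r. Cc a * r powr (- real DIM('a)) - M / real DIM('a))"
    define \<Phi>' where "\<Phi>' = (\<lambda>r. Cc a * (- real DIM('a) * r powr (- real DIM('a) - 1)))"
    define G where "G = (\<lambda>b x. \<Phi> (norm (x - x0)) *\<^sub>R b + ((x - x0) \<bullet> b) *\<^sub>R ((\<Phi>' (norm (x - x0)) / norm (x - x0)) *\<^sub>R (x - x0)))"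
    note FD = flux_div[OF \<Phi>_def \<Phi>'_def G_def]
    define \<psi>b where "\<psi>b b x = \<Phi> (norm (x - x0)) * ((x - x0) \<bullet> b)" for b x
    have flux: "norm (g a x) powr (p - 2) * A (norm (g a x)) * (g a x \<bullet> Y) = \<Phi> (norm (x - x0)) * ((x - x0) \<bullet> Y)"
      if x: "x \<in> \<Omega>" for x Y
    proof -
      define r where "r = norm (x - x0)"
      have r: "0 < r" "r < R" using \<Omega>r[OF x] by (auto simp: r_def)
      define W where "W = w a r"
      have W0: "W \<ge> 0" and \<phi>W: "\<phi> W = hh a r" using w\<phi>[OF r] by (auto simp: W_def)
      have gx: "g a x = (W / r) *\<^sub>R (x - x0)" by (simp add: g_def W_def r_def)
      have ng: "norm (g a x) = W" using r W0 by (simp add: gx r_def)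
      have Wq: "W powr (p - 2) * W = W powr q"
      proof (cases "W = 0")
        case True then show ?thesis by simp
      next
        case False
        have e1: "W powr (p - 2 + 1) = W powr (p - 2) * W powr 1" by (rule powr_add)
        have e2: "p - 2 + 1 = q" by (simp add: q_def)
        show ?thesis using e1 e2 abs_of_nonneg[OF W0] by simp
      qed
      have rp: "r powr (1 - n) = r * r powr (- n)" using powr_add[of r 1 "- n"] r by simp
      have rn: "r ^ DIM('a) * r powr (- n) = 1"
        using powr_realpow[OF r(1), of "DIM('a)"] powr_add[of r n "- n"] r by (simp add: n_def)
      have key: "W powr (p - 2) * A W * (W / r) = \<Phi> r"
      proof -
        have "W powr (p - 2) * A W * (W / r) = \<phi> W / r" using Wq by (simp add: \<phi>_def)
        also have "\<dots> = (Cc a - M * r ^ DIM('a) / n) * r powr (- n)"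
          using \<phi>W r by (simp add: hh_def rp)
        also have "\<dots> = Cc a * r powr (- n) - M / n * (r ^ DIM('a) * r powr (- n))"
          by (simp add: algebra_simps)
        also have "\<dots> = \<Phi> r" by (simp add: rn[unfolded n_def] \<Phi>_def n_def)
        finally show ?thesis .
      qed
      have "norm (g a x) powr (p - 2) * A (norm (g a x)) * (g a x \<bullet> Y)
            = (W powr (p - 2) * A W * (W / r)) * ((x - x0) \<bullet> Y)"
        unfolding ng by (simp add: gx)
      also have "\<dots> = \<Phi> r * ((x - x0) \<bullet> Y)" by (simp only: key)
      finally show ?thesis by (simp add: r_def)
    qed
    have R2': "\<forall>\<eta>. test_fun \<Omega> \<eta> \<and> (\<forall>x. \<eta> x \<ge> 0) \<longrightarrow>
        set_integrable lebesgue \<Omega> (\<lambda>x. norm (g a x) powr (p - 2) * A (norm (g a x)) * (g a x \<bullet> grad \<eta> x)) \<and>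
        set_integrable lebesgue \<Omega> (\<lambda>x. f x * \<eta> x) \<and>
        (LINT x:\<Omega>|lebesgue. norm (g a x) powr (p - 2) * A (norm (g a x)) * (g a x \<bullet> grad \<eta> x))
          \<ge> (LINT x:\<Omega>|lebesgue. f x * \<eta> x)"
    proof (intro allI impI conjI)
      fix \<eta> assume H: "test_fun \<Omega> \<eta> \<and> (\<forall>x. \<eta> x \<ge> 0)"
      then have \<eta>: "test_fun \<Omega> \<eta>" and \<eta>pos: "\<And>x. \<eta> x \<ge> 0" by auto
      note TU = test_unpack[OF \<eta>]
      define D where "D x b = frechet_derivative \<eta> (at x) b" for x b
      have \<eta>c: "continuous_on UNIV \<eta>"
        using TU(1) has_derivative_continuous by (meson continuous_at_imp_continuous_on)
      have \<psi>D: "(\<psi>b b has_derivative (\<lambda>h. G b x \<bullet> h)) (at x)" if "x \<in> \<Omega>" for b x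
      proof -
        have "x \<noteq> x0" using \<Omega>r[OF that] by auto
        from FD(1)[OF this, of b] show ?thesis by (simp add: \<psi>b_def[abs_def])
      qed
      have Gc: "continuous_on \<Omega> (\<lambda>x. G b x \<bullet> b)" for b
        by (rule continuous_on_subset[OF FD(2)]) (auto simp: \<Omega>_def)
      have IB1: "set_integrable lebesgue \<Omega> (\<lambda>x. \<psi>b b x * frechet_derivative \<eta> (at x) b)"
        and IB2: "set_integrable lebesgue \<Omega> (\<lambda>x. (G b x \<bullet> b) * \<eta> x)"
        and IB3: "(LINT x:\<Omega>|lebesgue. \<psi>b b x * frechet_derivative \<eta> (at x) b) = - (LINT x:\<Omega>|lebesgue. (G b x \<bullet> b) * \<eta> x)"
        if b: "b \<in> (Basis :: 'a set)" for b
      proof -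
        have nb: "norm b = 1" using b by simp
        note I = ibp[OF \<Omega>open TU(3) TU(4) TU(5) TU(1) TU(2)[OF b] \<psi>D Gc nb]
        show "set_integrable lebesgue \<Omega> (\<lambda>x. \<psi>b b x * frechet_derivative \<eta> (at x) b)" by (rule I(1))
        show "set_integrable lebesgue \<Omega> (\<lambda>x. (G b x \<bullet> b) * \<eta> x)" by (rule I(2))
        show "(LINT x:\<Omega>|lebesgue. \<psi>b b x * frechet_derivative \<eta> (at x) b) = - (LINT x:\<Omega>|lebesgue. (G b x \<bullet> b) * \<eta> x)"
          by (rule I(3))
      qed
      have feq: "norm (g a x) powr (p - 2) * A (norm (g a x)) * (g a x \<bullet> grad \<eta> x)
          = (\<Sum>b\<in>Basis. \<psi>b b x * frechet_derivative \<eta> (at x) b)" if x: "x \<in> \<Omega>" for x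
      proof -
        have "(x - x0) \<bullet> grad \<eta> x = (\<Sum>b\<in>Basis. frechet_derivative \<eta> (at x) b * ((x - x0) \<bullet> b))"
          by (simp add: grad_def inner_sum_right)
        then show ?thesis using flux[OF x, of "grad \<eta> x"]
          by (simp add: \<psi>b_def sum_distrib_left mult.commute mult.left_commute)
      qed
      have S1: "set_integrable lebesgue \<Omega> (\<lambda>x. \<Sum>b\<in>Basis. \<psi>b b x * frechet_derivative \<eta> (at x) b)"
        by (rule set_sum_both(1)[OF finite_Basis IB1])
      show "set_integrable lebesgue \<Omega> (\<lambda>x. norm (g a x) powr (p - 2) * A (norm (g a x)) * (g a x \<bullet> grad \<eta> x))"
        by (rule iffD2[OF set_cong_both(1)[OF feq] S1])
      have sub: "\<Omega> \<subseteq> ball x0 R" by (auto simp: \<Omega>_def)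
      have Ifx: "set_integrable lebesgue \<Omega> (\<lambda>x. f x * \<eta> x)"
        by (rule f_eta_int[OF f_Linf sub \<Omega>open \<eta>c TU(3) TU(4) TU(5)])
      show "set_integrable lebesgue \<Omega> (\<lambda>x. f x * \<eta> x)" by (rule Ifx)
      have I\<eta>: "set_integrable lebesgue \<Omega> \<eta>" by (rule cs_set_integrable(1)[OF \<eta>c TU(3) TU(4) TU(5)])
      have IM: "set_integrable lebesgue \<Omega> (\<lambda>x. M * \<eta> x)" by (rule set_integrable_mult_right[OF I\<eta>])
      have divc: "(\<Sum>b\<in>Basis. (G b x \<bullet> b) * \<eta> x) = - M * \<eta> x" if x: "x \<in> \<Omega>" for x
      proof -
        have "x \<noteq> x0" using \<Omega>r[OF x] by auto
        then have "(\<Sum>b\<in>Basis. G b x \<bullet> b) = - M" by (rule FD(3))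
        then show ?thesis by (simp add: sum_distrib_right[symmetric])
      qed
      have "(LINT x:\<Omega>|lebesgue. norm (g a x) powr (p - 2) * A (norm (g a x)) * (g a x \<bullet> grad \<eta> x))
          = (LINT x:\<Omega>|lebesgue. (\<Sum>b\<in>Basis. \<psi>b b x * frechet_derivative \<eta> (at x) b))"
        by (rule set_cong_both(2)[OF feq])
      also have "\<dots> = (\<Sum>b\<in>Basis. LINT x:\<Omega>|lebesgue. \<psi>b b x * frechet_derivative \<eta> (at x) b)"
        by (rule set_sum_both(2)[OF finite_Basis IB1])
      also have "\<dots> = (\<Sum>b\<in>Basis. - (LINT x:\<Omega>|lebesgue. (G b x \<bullet> b) * \<eta> x))"
        by (rule sum.cong[OF refl IB3])
      also have "\<dots> = - (\<Sum>b\<in>Basis. LINT x:\<Omega>|lebesgue. (G b x \<bullet> b) * \<eta> x)"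
        by (simp add: sum_negf)
      also have "(\<Sum>b\<in>Basis. LINT x:\<Omega>|lebesgue. (G b x \<bullet> b) * \<eta> x) = (LINT x:\<Omega>|lebesgue. (\<Sum>b\<in>Basis. (G b x \<bullet> b) * \<eta> x))"
        by (rule set_sum_both(2)[OF finite_Basis IB2, symmetric])
      also have "\<dots> = (LINT x:\<Omega>|lebesgue. - M * \<eta> x)"
        by (rule set_cong_both(2)[OF divc])
      also have "- \<dots> = (LINT x:\<Omega>|lebesgue. M * \<eta> x)" by (simp only: set_integral_mult_right)
      finally have eqM: "(LINT x:\<Omega>|lebesgue. norm (g a x) powr (p - 2) * A (norm (g a x)) * (g a x \<bullet> grad \<eta> x))
          = (LINT x:\<Omega>|lebesgue. M * \<eta> x)" .
      have AEf: "AE x in lebesgue. x \<in> ball x0 R \<longrightarrow> \<bar>f x\<bar> \<le> M"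
        using Linf_facts(2)[OF f_Linf] by (simp add: M_def)
      have AE2: "AE x\<in>\<Omega> in lebesgue. f x * \<eta> x \<le> M * \<eta> x"
        using AEf
      proof (rule eventually_mono)
        fix x assume Hx: "x \<in> ball x0 R \<longrightarrow> \<bar>f x\<bar> \<le> M"
        show "x \<in> \<Omega> \<longrightarrow> f x * \<eta> x \<le> M * \<eta> x"
        proof
          assume "x \<in> \<Omega>"
          then have "f x \<le> M" using Hx sub by auto
          then show "f x * \<eta> x \<le> M * \<eta> x" using \<eta>pos[of x] by (rule mult_right_mono)
        qed
      qed
      have "(LINT x:\<Omega>|lebesgue. f x * \<eta> x) \<le> (LINT x:\<Omega>|lebesgue. M * \<eta> x)"
        by (rule set_integral_mono_AE[OF Ifx IM AE2])
      then show "(LINT x:\<Omega>|lebesgue. norm (g a x) powr (p - 2) * A (norm (g a x)) * (g a x \<bullet> grad \<eta> x))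
          \<ge> (LINT x:\<Omega>|lebesgue. f x * \<eta> x)" using eqM by simp
    qed
    have R2: "weak_supersolution p A f (ball x0 R - {x0}) (v a)"
      unfolding weak_supersolution_def \<Omega>_def[symmetric]
      using WG LPv LPg R2' by blast
    show "(\<forall>x y. dist x x0 = dist y x0 \<longrightarrow> v a x = v a y) \<and>
     weak_supersolution p A f (ball x0 R - {x0}) (v a) \<and>
     (\<forall>x\<in>ball x0 R.
        let \<alpha> = (p - real DIM('a)) / (p - 1) in
        (1 / L) powr (1 / (p - 1)) * a * (norm (x - x0) powr \<alpha> / \<alpha>) \<le> v a x \<and>
        v a x \<le> (1 / \<delta>) powr (1 / (p - 1)) *
          (a + (R ^ DIM('a) * Linf_norm (ball x0 R) f / real DIM('a)) powr (1 / (p - 1))) *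
          (norm (x - x0) powr \<alpha> / \<alpha>))"
      using R1 R2 R3 by blast
  qed
qed


end
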